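(* Let $m,n\in\mathbb N$, $M_A=M_m(\mathbb C)$, $M_B=M_n(\mathbb C)$, and let $U_A\in M_A$, $U_B\in M_B$ be unitary matrices. If a quantum $U_A\otimes U_B$-state $\rho\in M_A\otimes M_B$ is $U_A\otimes U_B$-separable, then $\rho$ is $U_A\otimes U_B$-positive partial transpose, i.e. $(\overline{U_A}\otimes U_B^* )\,\rho^{\tau}$ is positive semidefinite, where $\rho^\tau=(t\otimes\mathrm{id})(\rho)$, $t$ is the transpose on $M_A$, and $\overline{U_A}$ is the entrywise complex conjugate of $U_A$.
   Context: For a unitary $U\in M_k(\mathbb C)$, a matrix $X\in M_k(\mathbb C)$ is $U$-positive if $U^*X$ is positive semidefinite, and is a quantum $U$-state if moreover $\mathrm{Tr}(U^*X)=1$. A quantum $U_A\otimes U_B$-state $\rho\in M_A\otimes M_B$ is a product $U_A\otimes U_B$-state if $\rho=\rho_A\otimes\rho_B$ with $\rho_A\in M_A$ $U_A$-positive and $\rho_B\in M_B$ $U_B$-positive; it is $U_A\otimes U_B$-separable if it is a convex combination of product $U_A\otimes U_B$-states. *)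

theory Defs
  imports "Jordan_Normal_Form.Matrix"
begin

definition conj_mat :: "complex mat \<Rightarrow> complex mat" where
  "conj_mat A = map_mat cnj A"

definition adj :: "complex mat \<Rightarrow> complex mat" where
  "adj A = transpose_mat (conj_mat A)"

definition unitary :: "nat \<Rightarrow> complex mat \<Rightarrow> bool" where
  "unitary k U \<longleftrightarrow> U \<in> carrier_mat k k \<and> adj U * U = 1\<^sub>m k \<and> U * adj U = 1\<^sub>m k"

definition psd :: "nat \<Rightarrow> complex mat \<Rightarrow> bool" where
  "psd k X \<longleftrightarrow> X \<in> carrier_mat k k \<and> adj X = X \<and>
     (\<forall>v \<in> carrier_vec k. let q = (X *\<^sub>v v) \<bullet>c v in Im q = 0 \<and> Re q \<ge> 0)"

definition U_positive :: "nat \<Rightarrow> complex mat \<Rightarrow> complex mat \<Rightarrow> bool" where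
  "U_positive k U X \<longleftrightarrow> X \<in> carrier_mat k k \<and> psd k (adj U * X)"

definition mtrace :: "complex mat \<Rightarrow> complex" where
  "mtrace A = (\<Sum>i<dim_row A. A $$ (i,i))"

definition quantum_U_state :: "nat \<Rightarrow> complex mat \<Rightarrow> complex mat \<Rightarrow> bool" where
  "quantum_U_state k U X \<longleftrightarrow> U_positive k U X \<and> mtrace (adj U * X) = 1"

text \<open>Kronecker product of an m x m and an n x n matrix, with the index of
  M_A \<otimes> M_B identified with (a,b) \<mapsto> a*n + b.\<close>
definition kron :: "nat \<Rightarrow> nat \<Rightarrow> complex mat \<Rightarrow> complex mat \<Rightarrow> complex mat" where
  "kron m n A B = mat (m*n) (m*n)
     (\<lambda>(i,j). A $$ (i div n, j div n) * B $$ (i mod n, j mod n))"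

text \<open>Partial transpose (t \<otimes> id) on the first tensor factor.\<close>
definition ptrans :: "nat \<Rightarrow> nat \<Rightarrow> complex mat \<Rightarrow> complex mat" where
  "ptrans m n \<rho> = mat (m*n) (m*n)
     (\<lambda>(i,j). \<rho> $$ ((j div n) * n + i mod n, (i div n) * n + j mod n))"

definition product_state ::
  "nat \<Rightarrow> nat \<Rightarrow> complex mat \<Rightarrow> complex mat \<Rightarrow> complex mat \<Rightarrow> bool" where
  "product_state m n UA UB \<rho> \<longleftrightarrow>
     quantum_U_state (m*n) (kron m n UA UB) \<rho> \<and>
     (\<exists>\<rho>A \<rho>B. \<rho> = kron m n \<rho>A \<rho>B \<and> U_positive m UA \<rho>A \<and> U_positive n UB \<rho>B)"

definition separable ::
  "nat \<Rightarrow> nat \<Rightarrow> complex mat \<Rightarrow> complex mat \<Rightarrow> complex mat \<Rightarrow> bool" where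
  "separable m n UA UB \<rho> \<longleftrightarrow>
     (\<exists>(K::nat) (p::nat \<Rightarrow> real) (\<sigma>::nat \<Rightarrow> complex mat).
        (\<forall>i<K. p i \<ge> 0 \<and> product_state m n UA UB (\<sigma> i)) \<and>
        (\<Sum>i<K. p i) = 1 \<and>
        \<rho> = mat (m*n) (m*n) (\<lambda>ij. \<Sum>i<K. complex_of_real (p i) * \<sigma> i $$ ij))"

end

theory Submission
  imports Defs
begin


definition qf :: "nat \<Rightarrow> (nat \<Rightarrow> nat \<Rightarrow> complex) \<Rightarrow> (nat \<Rightarrow> complex) \<Rightarrow> complex" where
  "qf k Q v = (\<Sum>i<k. \<Sum>j<k. cnj (v i) * Q i j * v j)"

definition fpsd :: "nat \<Rightarrow> (nat \<Rightarrow> nat \<Rightarrow> complex) \<Rightarrow> bool" where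
  "fpsd k Q \<longleftrightarrow> (\<forall>i<k. \<forall>j<k. Q j i = cnj (Q i j)) \<and>
     (\<forall>v. Im (qf k Q v) = 0 \<and> Re (qf k Q v) \<ge> 0)"

lemma qf_vec: assumes X: "X \<in> carrier_mat k k"
  shows "(X *\<^sub>v vec k v) \<bullet>c vec k v = qf k (\<lambda>i j. X $$ (i,j)) v"
proof -
  have "(X *\<^sub>v vec k v) \<bullet>c vec k v = (\<Sum>i<k. (\<Sum>j<k. X $$ (i,j) * v j) * cnj (v i))"
    using X by (simp add: scalar_prod_def atLeast0LessThan)
  also have "\<dots> = qf k (\<lambda>i j. X $$ (i,j)) v"
    unfolding qf_def sum_distrib_right by (intro sum.cong refl) (simp add: ac_simps)
  finally show ?thesis .
qed

lemma vec_eta: "v \<in> carrier_vec k \<Longrightarrow> vec k (\<lambda>i. v $ i) = v"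
  by auto

lemma adj_entry: assumes X: "X \<in> carrier_mat k k" "i < k" "j < k"
  shows "adj X $$ (j,i) = cnj (X $$ (i,j))" using X by (simp add: adj_def conj_mat_def)

lemma psd_iff:
  "psd k X \<longleftrightarrow> X \<in> carrier_mat k k \<and> fpsd k (\<lambda>i j. X $$ (i,j))"
proof
  assume a: "psd k X"
  have p: "X \<in> carrier_mat k k \<and> adj X = X \<and>
     (\<forall>v \<in> carrier_vec k. let q = (X *\<^sub>v v) \<bullet>c v in Im q = 0 \<and> Re q \<ge> 0)"
    using a unfolding psd_def .
  note X = conjunct1[OF p]
  note h = conjunct1[OF conjunct2[OF p]]
  note p3 = conjunct2[OF conjunct2[OF p]]
  have herm: "\<forall>i<k. \<forall>j<k. X $$ (j,i) = cnj (X $$ (i,j))"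
  proof (intro allI impI)
    fix i j assume "i < k" "j < k"
    thus "X $$ (j,i) = cnj (X $$ (i,j))" using adj_entry[OF X, of i j] h by simp
  qed
  have qv: "Im (qf k (\<lambda>i j. X $$ (i,j)) v) = 0 \<and> Re (qf k (\<lambda>i j. X $$ (i,j)) v) \<ge> 0" for v
  proof -
    have "vec k v \<in> carrier_vec k" by simp
    hence "let q = (X *\<^sub>v vec k v) \<bullet>c vec k v in Im q = 0 \<and> Re q \<ge> 0"
      using p3 by (rule bspec[rotated])
    thus ?thesis unfolding Let_def qf_vec[OF X] .
  qed
  have "fpsd k (\<lambda>i j. X $$ (i,j))" unfolding fpsd_def using herm qv by blast
  thus "X \<in> carrier_mat k k \<and> fpsd k (\<lambda>i j. X $$ (i,j))" using X by (rule conjI[rotated])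
next
  assume a: "X \<in> carrier_mat k k \<and> fpsd k (\<lambda>i j. X $$ (i,j))"
  note X = conjunct1[OF a]
  have f: "(\<forall>i<k. \<forall>j<k. X $$ (j,i) = cnj (X $$ (i,j))) \<and>
     (\<forall>v. Im (qf k (\<lambda>i j. X $$ (i,j)) v) = 0 \<and> Re (qf k (\<lambda>i j. X $$ (i,j)) v) \<ge> 0)"
    using conjunct2[OF a] unfolding fpsd_def .
  note f1 = conjunct1[OF f]
  note f2 = conjunct2[OF f]
  have "adj X = X"
  proof (rule eq_matI)
    fix i j assume "i < dim_row X" "j < dim_col X"
    hence ij: "i < k" "j < k" using X by auto
    show "adj X $$ (i, j) = X $$ (i, j)" using adj_entry[OF X ij(2) ij(1)] f1[rule_format, OF ij(2) ij(1)] by simp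
  qed (use X in \<open>simp_all add: adj_def conj_mat_def\<close>)
  moreover have "\<forall>v \<in> carrier_vec k. let q = (X *\<^sub>v v) \<bullet>c v in Im q = 0 \<and> Re q \<ge> 0"
  proof
    fix v :: "complex vec" assume v: "v \<in> carrier_vec k"
    have "(X *\<^sub>v v) \<bullet>c v = qf k (\<lambda>i j. X $$ (i,j)) (\<lambda>i. v $ i)"
      using qf_vec[OF X, of "\<lambda>i. v $ i"] vec_eta[OF v] by simp
    thus "let q = (X *\<^sub>v v) \<bullet>c v in Im q = 0 \<and> Re q \<ge> 0" unfolding Let_def using f2 by simp
  qed
  ultimately show "psd k X" using X by (simp only: psd_def)
qed

lemma qf_Suc: "qf (Suc n) Q v = qf n Q v + cnj (v n) * (\<Sum>j<n. Q n j * v j)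
   + (\<Sum>i<n. cnj (v i) * Q i n) * v n + cnj (v n) * Q n n * v n"
proof -
  have "qf (Suc n) Q v = qf n Q v + (\<Sum>i<n. cnj (v i) * Q i n * v n)
     + ((\<Sum>j<n. cnj (v n) * Q n j * v j) + cnj (v n) * Q n n * v n)"
    unfolding qf_def by (simp add: sum.distrib)
  moreover have "(\<Sum>i<n. cnj (v i) * Q i n * v n) = (\<Sum>i<n. cnj (v i) * Q i n) * v n"
    by (simp add: sum_distrib_right)
  moreover have "(\<Sum>j<n. cnj (v n) * Q n j * v j) = cnj (v n) * (\<Sum>j<n. Q n j * v j)"
    by (simp add: sum_distrib_left mult.assoc)
  ultimately show ?thesis by simp
qed

lemma qf_cong: "(\<And>i. i < k \<Longrightarrow> v i = w i) \<Longrightarrow> (\<And>i j. i < k \<Longrightarrow> j < k \<Longrightarrow> Q i j = R i j)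
   \<Longrightarrow> qf k Q v = qf k R w"
  unfolding qf_def by (intro sum.cong refl) simp_all

lemma fpsd_cong: assumes e: "\<And>i j. i < k \<Longrightarrow> j < k \<Longrightarrow> Q i j = R i j"
  shows "fpsd k Q \<longleftrightarrow> fpsd k R"
proof -
  have q: "qf k Q v = qf k R v" for v by (rule qf_cong) (simp_all add: e)
  have h: "(\<forall>i<k. \<forall>j<k. Q j i = cnj (Q i j)) \<longleftrightarrow> (\<forall>i<k. \<forall>j<k. R j i = cnj (R i j))"
    using e by simp
  show ?thesis unfolding fpsd_def q h ..
qed

lemma qf_two:
  assumes "a < k" "b < k" "a \<noteq> b"
  shows "qf k Q (\<lambda>i. if i = a then x else if i = b then y else 0) =
    cnj x * Q a a * x + cnj x * Q a b * y + cnj y * Q b a * x + cnj y * Q b b * y"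
proof -
  have in1: "(\<Sum>j<k. cnj (if i = a then x else if i = b then y else 0) * Q i j * (if j = a then x else if j = b then y else 0))
     = cnj (if i = a then x else if i = b then y else 0) * (Q i a * x + Q i b * y)" for i
  proof -
    have "(\<Sum>j<k. cnj (if i = a then x else if i = b then y else 0) * Q i j * (if j = a then x else if j = b then y else 0))
       = (\<Sum>j<k. cnj (if i = a then x else if i = b then y else 0) * ((if j = a then Q i a * x else 0) + (if j = b then Q i b * y else 0)))"
      using assms by (intro sum.cong refl) auto
    also have "\<dots> = cnj (if i = a then x else if i = b then y else 0) * (Q i a * x + Q i b * y)"
      using assms by (simp add: sum.distrib sum_distrib_left[symmetric])
    finally show ?thesis .
  qed
  have "qf k Q (\<lambda>i. if i = a then x else if i = b then y else 0) =
     (\<Sum>i<k. (if i = a then cnj x * (Q a a * x + Q a b * y) else 0) + (if i = b then cnj y * (Q b a * x + Q b b * y) else 0))"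
    unfolding qf_def in1 using assms by (intro sum.cong refl) auto
  also have "\<dots> = cnj x * Q a a * x + cnj x * Q a b * y + cnj y * Q b a * x + cnj y * Q b b * y"
    using assms by (simp add: sum.distrib algebra_simps)
  finally show ?thesis .
qed

lemma fpsdH: "fpsd k Q \<Longrightarrow> i < k \<Longrightarrow> j < k \<Longrightarrow> Q j i = cnj (Q i j)"
  unfolding fpsd_def by blast

lemma fpsdIm: "fpsd k Q \<Longrightarrow> Im (qf k Q v) = 0"
  unfolding fpsd_def by blast

lemma fpsdRe: "fpsd k Q \<Longrightarrow> Re (qf k Q v) \<ge> 0"
  unfolding fpsd_def by blast

lemma fpsdI: "(\<And>i j. i < k \<Longrightarrow> j < k \<Longrightarrow> Q j i = cnj (Q i j)) \<Longrightarrow>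
  (\<And>v. Im (qf k Q v) = 0) \<Longrightarrow> (\<And>v. Re (qf k Q v) \<ge> 0) \<Longrightarrow> fpsd k Q"
  unfolding fpsd_def by blast

lemma zero_pivot:
  assumes f: "fpsd k Q" and a: "a < k" and j: "j < k" and z: "Q a a = 0"
  shows "Q a j = 0"
proof (rule ccontr)
  assume c0: "Q a j \<noteq> 0"
  define c where "c = Q a j"
  define N where "N = (cmod c)^2"
  have N: "N > 0" using c0 unfolding N_def c_def by simp
  have cc: "cnj c * c = of_real N" unfolding N_def by (subst complex_norm_square) (rule mult.commute)
  have aj: "a \<noteq> j" using z c0 by auto
  have h: "Q j a = cnj c" using fpsdH[OF f a j] unfolding c_def .
  define s where "s = (Re (Q j j) + 1) / (2 * N)"
  define t where "t = - of_real s * c"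
  have "qf k Q (\<lambda>i. if i = a then t else if i = j then 1 else 0) =
      cnj t * Q a a * t + cnj t * Q a j * 1 + cnj 1 * Q j a * t + cnj 1 * Q j j * 1"
    by (rule qf_two[OF a j aj])
  also have "\<dots> = Q j j - 2 * of_real (s * N)"
    unfolding z h c_def[symmetric] t_def using cc by (simp add: algebra_simps)
  finally have "Re (qf k Q (\<lambda>i. if i = a then t else if i = j then 1 else 0)) = Re (Q j j) - 2 * s * N"
    by simp
  also have "\<dots> = -1" unfolding s_def using N by (simp add: field_simps)
  finally show False using fpsdRe[OF f, of "\<lambda>i. if i = a then t else if i = j then 1 else 0"] by simp
qed

lemma qf_zero_vec: "qf k Q (\<lambda>_. 0) = 0"
  unfolding qf_def by simp

lemma fpsd_restrict: assumes "fpsd (Suc n) Q" shows "fpsd n Q"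
proof -
  have "qf n Q v = qf (Suc n) Q (\<lambda>i. if i < n then v i else 0)" for v
  proof -
    have "qf n Q (\<lambda>i. if i < n then v i else 0) = qf n Q v" by (rule qf_cong) auto
    thus ?thesis by (simp add: qf_Suc)
  qed
  note e = this
  show ?thesis
  proof (rule fpsdI)
    fix i j assume "i < n" "j < n"
    thus "Q j i = cnj (Q i j)" by (intro fpsdH[OF assms]) auto
  next
    fix v show "Im (qf n Q v) = 0" unfolding e by (rule fpsdIm[OF assms])
  next
    fix v show "Re (qf n Q v) \<ge> 0" unfolding e by (rule fpsdRe[OF assms])
  qed
qed

lemma fpsd_diag: assumes "fpsd (Suc n) Q" shows "Im (Q n n) = 0 \<and> Re (Q n n) \<ge> 0"
proof -
  have "qf n Q (\<lambda>i. if i = n then 1 else 0) = qf n Q (\<lambda>_. 0)" by (rule qf_cong) auto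
  hence "qf (Suc n) Q (\<lambda>i. if i = n then 1 else 0) = Q n n"
    by (simp add: qf_Suc qf_zero_vec)
  thus ?thesis using fpsdIm[OF assms, of "\<lambda>i. if i = n then 1 else 0"] fpsdRe[OF assms, of "\<lambda>i. if i = n then 1 else 0"] by simp
qed

lemma gram: "fpsd n Q \<Longrightarrow> \<exists>y. \<forall>i<n. \<forall>j<n. Q i j = (\<Sum>l<n. y l i * cnj (y l j))"
proof (induction n arbitrary: Q)
  case 0 show ?case by simp
next
  case (Suc n Q)
  note herm = fpsdH[OF Suc.prems]
  have dg: "Im (Q n n) = 0" "Re (Q n n) \<ge> 0" using fpsd_diag[OF Suc.prems] by auto
  show ?case
  proof (cases "Q n n = 0")
    case True
    have r0: "Q n j = 0" if "j < Suc n" for j using zero_pivot[OF Suc.prems _ that True] by simp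
    have c0: "Q j n = 0" if "j < Suc n" for j using herm[OF that, of n] r0[OF that] by simp
    obtain y where y: "\<forall>i<n. \<forall>j<n. Q i j = (\<Sum>l<n. y l i * cnj (y l j))"
      using Suc.IH[OF fpsd_restrict[OF Suc.prems]] by blast
    define y' where "y' l i = (if l < n \<and> i < n then y l i else 0)" for l i
    have "Q i j = (\<Sum>l<Suc n. y' l i * cnj (y' l j))" if "i < Suc n" "j < Suc n" for i j
    proof (cases "i < n \<and> j < n")
      case True
      thus ?thesis using y by (simp add: y'_def)
    next
      case False
      hence "i = n \<or> j = n" using that by auto
      thus ?thesis using r0 c0 that by (auto simp: y'_def)
    qed
    thus ?thesis by blast
  next
    case False
    define r where "r = sqrt (Re (Q n n))"
    have rpos: "r > 0" using dg False unfolding r_def by (simp add: complex_eq_iff)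
    have qr: "Q n n = of_real r * of_real r"
      using dg unfolding r_def by (simp add: complex_eq_iff)
    define z where "z i = Q i n / of_real r" for i
    define Q' where "Q' i j = Q i j - z i * cnj (z j)" for i j
    have "fpsd n Q'"
      unfolding fpsd_def
    proof (intro conjI allI impI)
      fix i j assume "i < n" "j < n"
      thus "Q' j i = cnj (Q' i j)" unfolding Q'_def using herm[of i j] by simp
    next
      fix v
      define s where "s = (\<Sum>j<n. Q n j * v j)"
      define w where "w i = (if i < n then v i else - s / Q n n)" for i
      have s1: "(\<Sum>j<n. cnj (z j) * v j) = s / of_real r"
        unfolding s_def z_def sum_divide_distrib
        by (intro sum.cong refl) (simp add: herm[of _ n])
      have s2: "(\<Sum>i<n. cnj (v i) * z i) = cnj s / of_real r"
        unfolding s_def z_def sum_divide_distrib cnj_sum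
        by (intro sum.cong refl) (simp add: herm[of _ n])
      have s3: "(\<Sum>i<n. cnj (v i) * Q i n) = cnj s"
        unfolding s_def cnj_sum
        by (intro sum.cong refl) (simp add: herm[of _ n])
      have "qf n Q' v = qf n Q v - (\<Sum>i<n. cnj (v i) * z i) * (\<Sum>j<n. cnj (z j) * v j)"
        unfolding qf_def Q'_def sum_product
        by (simp add: sum_subtractf[symmetric] algebra_simps)
      also have "\<dots> = qf n Q v - cnj s * s / (of_real r * of_real r)"
        unfolding s1 s2 by simp
      also have "\<dots> = qf (Suc n) Q w"
      proof -
        have "qf n Q w = qf n Q v" by (rule qf_cong) (auto simp: w_def)
        moreover have "(\<Sum>j<n. Q n j * w j) = s" unfolding s_def w_def by simp
        moreover have "(\<Sum>i<n. cnj (w i) * Q i n) = cnj s" unfolding w_def using s3 by simp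
        ultimately have e: "qf (Suc n) Q w = qf n Q v + cnj (w n) * s + cnj s * w n
            + cnj (w n) * (of_real r * of_real r) * w n"
          unfolding qf_Suc qr by simp
        have wn: "w n = - s / (of_real r * of_real r)" unfolding w_def qr by simp
        have cwn: "cnj (w n) = - cnj s / (of_real r * of_real r)" unfolding wn by simp
        have r0: "(of_real r :: complex) \<noteq> 0" using rpos by simp
        show ?thesis unfolding e wn cwn using r0 by (simp add: field_simps)
      qed
      finally show "Im (qf n Q' v) = 0" "Re (qf n Q' v) \<ge> 0"
        using fpsdIm[OF Suc.prems] fpsdRe[OF Suc.prems] by simp_all
    qed
    then obtain y where y: "\<forall>i<n. \<forall>j<n. Q' i j = (\<Sum>l<n. y l i * cnj (y l j))"
      using Suc.IH by blast
    define y' where "y' l i = (if l < n then (if i < n then y l i else 0) else z i)" for l i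
    have "Q i j = (\<Sum>l<Suc n. y' l i * cnj (y' l j))" if "i < Suc n" "j < Suc n" for i j
    proof (cases "i < n \<and> j < n")
      case True
      hence "(\<Sum>l<Suc n. y' l i * cnj (y' l j)) = Q' i j + z i * cnj (z j)"
        using y by (simp add: y'_def)
      thus ?thesis unfolding Q'_def by simp
    next
      case False
      hence "(\<Sum>l<Suc n. y' l i * cnj (y' l j)) = z i * cnj (z j)"
        by (auto simp: y'_def)
      also have "\<dots> = Q i n * Q n j / Q n n"
        unfolding z_def qr using herm[of n j] that by simp
      also have "\<dots> = Q i j"
        using False that \<open>Q n n \<noteq> 0\<close> by (auto simp: less_Suc_eq)
      finally show ?thesis by simp
    qed
    thus ?thesis by blast
  qed
qed

lemma sum_split_mult: "(\<Sum>k<m*n. f k) = (\<Sum>a<m. \<Sum>b<n. f (a*n+b :: nat))"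
proof (induction m)
  case 0 show ?case by simp
next
  case (Suc m)
  have "{..<Suc m * n} = {..<m*n} \<union> (\<lambda>b. m*n+b) ` {..<n}"
  proof -
    have "x \<in> {..<m*n} \<union> (\<lambda>b. m*n+b) ` {..<n}" if "x < Suc m * n" for x
    proof (cases "x < m*n")
      case False
      hence "x = m*n + (x - m*n)" "x - m*n < n" using that by auto
      thus ?thesis by blast
    qed auto
    thus ?thesis by auto
  qed
  moreover have "{..<m*n} \<inter> (\<lambda>b. m*n+b) ` {..<n} = {}" by auto
  ultimately have "(\<Sum>k<Suc m * n. f k) = (\<Sum>k<m*n. f k) + (\<Sum>k\<in>(\<lambda>b. m*n+b) ` {..<n}. f k)"
    by (simp add: sum.union_disjoint)
  also have "(\<Sum>k\<in>(\<lambda>b. m*n+b) ` {..<n}. f k) = (\<Sum>b<n. f (m*n+b))"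
    by (simp add: sum.reindex)
  finally show ?case using Suc by simp
qed


lemma sum_swap3: "(\<Sum>x\<in>A. \<Sum>y\<in>B. \<Sum>z\<in>C. f x y z) = (\<Sum>x\<in>A. \<Sum>z\<in>C. \<Sum>y\<in>B. f x y z)"
  by (rule sum.cong[OF refl]) (rule sum.swap)

lemma gram_bil: assumes "\<And>b d. b < n \<Longrightarrow> d < n \<Longrightarrow> B b d = (\<Sum>l<n. y l b * cnj (y l d))"
  shows "(\<Sum>b<n. \<Sum>d<n. X b * B b d * Y d) = (\<Sum>l<n. (\<Sum>b<n. X b * y l b) * (\<Sum>d<n. cnj (y l d) * Y d))"
proof -
  have "(\<Sum>b<n. \<Sum>d<n. X b * B b d * Y d) = (\<Sum>b<n. \<Sum>d<n. \<Sum>l<n. X b * y l b * (cnj (y l d) * (Y d :: complex)))"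
    by (intro sum.cong refl) (simp add: assms sum_distrib_left sum_distrib_right mult.assoc)
  also have "\<dots> = (\<Sum>b<n. \<Sum>l<n. \<Sum>d<n. X b * y l b * (cnj (y l d) * Y d))" by (rule sum_swap3)
  also have "\<dots> = (\<Sum>l<n. \<Sum>b<n. \<Sum>d<n. X b * y l b * (cnj (y l d) * Y d))" by (rule sum.swap)
  also have "\<dots> = (\<Sum>l<n. (\<Sum>b<n. X b * y l b) * (\<Sum>d<n. cnj (y l d) * Y d))"
    by (simp add: sum_product)
  finally show ?thesis .
qed

lemma dm: "b < (n::nat) \<Longrightarrow> (a*n+b) div n = a \<and> (a*n+b) mod n = b"
  by simp

lemma kron_fpsd:
  assumes A: "fpsd m A" and B: "fpsd n B"
  shows "fpsd (m*n) (\<lambda>i j. A (i div n) (j div n) * B (i mod n) (j mod n))"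
proof (cases "n = 0")
  case True
  show ?thesis by (rule fpsdI) (simp_all add: True qf_def)
next
  case False
  hence np: "n > 0" by simp
  obtain y where y: "\<forall>i<n. \<forall>j<n. B i j = (\<Sum>l<n. y l i * cnj (y l j))" using gram[OF B] by blast
  have yB: "\<And>b d. b < n \<Longrightarrow> d < n \<Longrightarrow> B b d = (\<Sum>l<n. y l b * cnj (y l d))" using y by blast
  have qfK: "qf (m*n) (\<lambda>i j. A (i div n) (j div n) * B (i mod n) (j mod n)) v = (\<Sum>l<n. qf m A (\<lambda>a. \<Sum>d<n. cnj (y l d) * v (a*n+d)))" for v
  proof -
    define w where "w l a = (\<Sum>d<n. cnj (y l d) * v (a*n+d))" for l a
    have "qf (m*n) (\<lambda>i j. A (i div n) (j div n) * B (i mod n) (j mod n)) v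
      = (\<Sum>a<m. \<Sum>b<n. \<Sum>c<m. \<Sum>d<n. cnj (v (a*n+b)) * (A a c * B b d) * v (c*n+d))"
      unfolding qf_def sum_split_mult by (intro sum.cong refl) (simp add: dm)
    also have "\<dots> = (\<Sum>a<m. \<Sum>c<m. \<Sum>b<n. \<Sum>d<n. cnj (v (a*n+b)) * (A a c * B b d) * v (c*n+d))"
      by (rule sum_swap3)
    also have "\<dots> = (\<Sum>a<m. \<Sum>c<m. A a c * (\<Sum>b<n. \<Sum>d<n. cnj (v (a*n+b)) * B b d * v (c*n+d)))"
      by (simp add: sum_distrib_left ac_simps)
    also have "\<dots> = (\<Sum>a<m. \<Sum>c<m. A a c * (\<Sum>l<n. (\<Sum>b<n. cnj (v (a*n+b)) * y l b) * (\<Sum>d<n. cnj (y l d) * v (c*n+d))))"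
      by (simp add: gram_bil[OF yB])
    also have "\<dots> = (\<Sum>a<m. \<Sum>c<m. A a c * (\<Sum>l<n. cnj (w l a) * w l c))"
    proof -
      have cw: "(\<Sum>b<n. cnj (v (a*n+b)) * y l b) = cnj (w l a)" for a l
        unfolding w_def cnj_sum by (simp add: mult.commute)
      have wc: "(\<Sum>d<n. cnj (y l d) * v (c*n+d)) = w l c" for c l
        unfolding w_def ..
      show ?thesis by (simp only: cw wc)
    qed
    also have "\<dots> = (\<Sum>a<m. \<Sum>c<m. \<Sum>l<n. cnj (w l a) * A a c * w l c)"
      by (simp add: sum_distrib_left ac_simps)
    also have "\<dots> = (\<Sum>a<m. \<Sum>l<n. \<Sum>c<m. cnj (w l a) * A a c * w l c)" by (rule sum_swap3)
    also have "\<dots> = (\<Sum>l<n. \<Sum>a<m. \<Sum>c<m. cnj (w l a) * A a c * w l c)" by (rule sum.swap)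
    also have "\<dots> = (\<Sum>l<n. qf m A (w l))" unfolding qf_def ..
    finally show ?thesis by (simp only: w_def[abs_def])
  qed
  show ?thesis
  proof (rule fpsdI)
    fix i j assume ij: "i < m*n" "j < m*n"
    have "i div n < m" "j div n < m" using ij by (auto simp: less_mult_imp_div_less)
    moreover have "i mod n < n" "j mod n < n" using np by auto
    ultimately show "A (j div n) (i div n) * B (j mod n) (i mod n) = cnj (A (i div n) (j div n) * B (i mod n) (j mod n))"
      using fpsdH[OF A, of "i div n" "j div n"] fpsdH[OF B, of "i mod n" "j mod n"] by simp
  next
    fix v show "Im (qf (m * n) (\<lambda>i j. A (i div n) (j div n) * B (i mod n) (j mod n)) v) = 0"
      unfolding qfK Im_sum using fpsdIm[OF A] by simp
  next
    fix v show "Re (qf (m * n) (\<lambda>i j. A (i div n) (j div n) * B (i mod n) (j mod n)) v) \<ge> 0"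
      unfolding qfK Re_sum using fpsdRe[OF A] by (simp add: sum_nonneg)
  qed
qed

lemma fpsd_sum:
  assumes Q: "\<And>l. l < K \<Longrightarrow> fpsd k (Q l)" and p: "\<And>l. l < K \<Longrightarrow> p l \<ge> 0"
  shows "fpsd k (\<lambda>i j. \<Sum>l<K. of_real (p l) * Q l i j)"
proof -
  have qfS: "qf k (\<lambda>i j. \<Sum>l<K. of_real (p l) * Q l i j) v = (\<Sum>l<K. of_real (p l) * qf k (Q l) v)" for v
  proof -
    have "qf k (\<lambda>i j. \<Sum>l<K. of_real (p l) * Q l i j) v =
       (\<Sum>i<k. \<Sum>j<k. \<Sum>l<K. of_real (p l) * (cnj (v i) * Q l i j * v j))"
      unfolding qf_def by (intro sum.cong refl) (simp add: sum_distrib_left sum_distrib_right ac_simps)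
    also have "\<dots> = (\<Sum>i<k. \<Sum>l<K. \<Sum>j<k. of_real (p l) * (cnj (v i) * Q l i j * v j))"
      by (rule sum_swap3)
    also have "\<dots> = (\<Sum>l<K. \<Sum>i<k. \<Sum>j<k. of_real (p l) * (cnj (v i) * Q l i j * v j))"
      by (rule sum.swap)
    also have "\<dots> = (\<Sum>l<K. of_real (p l) * qf k (Q l) v)"
      unfolding qf_def by (simp add: sum_distrib_left)
    finally show ?thesis .
  qed
  show ?thesis
  proof (rule fpsdI)
    fix i j assume ij: "i < k" "j < k"
    show "(\<Sum>l<K. of_real (p l) * Q l j i) = cnj (\<Sum>l<K. of_real (p l) * Q l i j)"
    proof -
      have h: "Q l j i = cnj (Q l i j)" if "l < K" for l using fpsdH[OF Q[OF that] ij] .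
      show ?thesis unfolding cnj_sum by (intro sum.cong refl) (simp add: h)
    qed
  next
    fix v show "Im (qf k (\<lambda>i j. \<Sum>l<K. of_real (p l) * Q l i j) v) = 0"
      unfolding qfS Im_sum by (intro sum.neutral) (simp add: fpsdIm[OF Q])
  next
    fix v show "Re (qf k (\<lambda>i j. \<Sum>l<K. of_real (p l) * Q l i j) v) \<ge> 0"
      unfolding qfS Re_sum by (intro sum_nonneg) (simp add: fpsdRe[OF Q] p)
  qed
qed

lemma sum_rev4: "(\<Sum>x\<in>S. \<Sum>y\<in>S. \<Sum>a\<in>S. \<Sum>c\<in>S. F x y a c) = (\<Sum>c\<in>S. \<Sum>a\<in>S. \<Sum>y\<in>S. \<Sum>x\<in>S. F x y a c)"
proof -
  have "(\<Sum>x\<in>S. \<Sum>y\<in>S. \<Sum>a\<in>S. \<Sum>c\<in>S. F x y a c) = (\<Sum>x\<in>S. \<Sum>y\<in>S. \<Sum>c\<in>S. \<Sum>a\<in>S. F x y a c)"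
    by (rule sum.cong[OF refl], rule sum.cong[OF refl], rule sum.swap)
  also have "\<dots> = (\<Sum>y\<in>S. \<Sum>x\<in>S. \<Sum>c\<in>S. \<Sum>a\<in>S. F x y a c)" by (rule sum.swap)
  also have "\<dots> = (\<Sum>y\<in>S. \<Sum>c\<in>S. \<Sum>x\<in>S. \<Sum>a\<in>S. F x y a c)" by (rule sum_swap3)
  also have "\<dots> = (\<Sum>c\<in>S. \<Sum>y\<in>S. \<Sum>x\<in>S. \<Sum>a\<in>S. F x y a c)" by (rule sum.swap)
  also have "\<dots> = (\<Sum>c\<in>S. \<Sum>y\<in>S. \<Sum>a\<in>S. \<Sum>x\<in>S. F x y a c)"
    by (rule sum.cong[OF refl], rule sum.cong[OF refl], rule sum.swap)
  also have "\<dots> = (\<Sum>c\<in>S. \<Sum>a\<in>S. \<Sum>y\<in>S. \<Sum>x\<in>S. F x y a c)" by (rule sum_swap3)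
  finally show ?thesis .
qed

lemma conj_fpsd:
  assumes P: "fpsd m P"
  shows "fpsd m (\<lambda>x y. \<Sum>a<m. cnj (U x a) * (\<Sum>c<m. U y c * P c a))"
proof (rule fpsdI)
  have cP: "a < m \<Longrightarrow> c < m \<Longrightarrow> cnj (P a c) = P c a" for a c using fpsdH[OF P, of a c] by simp
  fix x y assume "x < m" "y < m"
  have "(\<Sum>a<m. cnj (U y a) * (\<Sum>c<m. U x c * P c a)) = (\<Sum>a<m. \<Sum>c<m. cnj (U y a) * (U x c * P c a))"
    by (simp add: sum_distrib_left)
  also have "\<dots> = (\<Sum>c<m. \<Sum>a<m. cnj (U y a) * (U x c * P c a))" by (rule sum.swap)
  also have "\<dots> = cnj (\<Sum>a<m. cnj (U x a) * (\<Sum>c<m. U y c * P c a))"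
    unfolding cnj_sum by (intro sum.cong refl) (simp add: sum_distrib_left cnj_sum cP ac_simps)
  finally show "(\<Sum>a<m. cnj (U y a) * (\<Sum>c<m. U x c * P c a)) = cnj (\<Sum>a<m. cnj (U x a) * (\<Sum>c<m. U y c * P c a))" .
next
  define w where "w v a = (\<Sum>x<m. cnj (U x a * v x))" for v a
  have qfA: "qf m (\<lambda>x y. \<Sum>a<m. cnj (U x a) * (\<Sum>c<m. U y c * P c a)) v = qf m P (w v)" for v
  proof -
    have "qf m (\<lambda>x y. \<Sum>a<m. cnj (U x a) * (\<Sum>c<m. U y c * P c a)) v =
      (\<Sum>x<m. \<Sum>y<m. \<Sum>a<m. \<Sum>c<m. cnj (v x) * cnj (U x a) * U y c * P c a * v y)"
      unfolding qf_def by (intro sum.cong refl) (simp add: sum_distrib_left sum_distrib_right ac_simps)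
    also have "\<dots> = (\<Sum>c<m. \<Sum>a<m. \<Sum>y<m. \<Sum>x<m. cnj (v x) * cnj (U x a) * U y c * P c a * v y)"
      by (rule sum_rev4)
    also have "\<dots> = qf m P (w v)"
      unfolding qf_def w_def cnj_sum by (intro sum.cong refl) (simp add: sum_distrib_left sum_distrib_right ac_simps)
    finally show ?thesis .
  qed
  fix v
  show "Im (qf m (\<lambda>x y. \<Sum>a<m. cnj (U x a) * (\<Sum>c<m. U y c * P c a)) v) = 0"
    unfolding qfA by (rule fpsdIm[OF P])
  show "Re (qf m (\<lambda>x y. \<Sum>a<m. cnj (U x a) * (\<Sum>c<m. U y c * P c a)) v) \<ge> 0"
    unfolding qfA by (rule fpsdRe[OF P])
qed



lemma mult_entry: "A \<in> carrier_mat r s \<Longrightarrow> B \<in> carrier_mat s t \<Longrightarrow> i < r \<Longrightarrow> j < t \<Longrightarrow>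
  (A * B) $$ (i,j) = (\<Sum>k<s. A $$ (i,k) * B $$ (k,j))"
  by (simp add: scalar_prod_def atLeast0LessThan)

lemma idx_bound: "a < m \<Longrightarrow> b < (n::nat) \<Longrightarrow> a*n + b < m*n"
proof -
  assume "a < m" "b < n"
  hence "a*n + b < (a+1)*n" by simp
  also have "\<dots> \<le> m*n" using \<open>a < m\<close> by (intro mult_right_mono) auto
  finally show ?thesis .
qed

lemma main_sum: "(\<Sum>a<m. \<Sum>b<n. F a * G b * (\<Sum>l<K. P l * (R l a * S l b))) =
   (\<Sum>l<K. P l * ((\<Sum>a<m. F a * R l a) * (\<Sum>b<n. G b * S l b)) :: complex)"
proof -
  have "(\<Sum>a<m. \<Sum>b<n. F a * G b * (\<Sum>l<K. P l * (R l a * S l b))) =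
     (\<Sum>a<m. \<Sum>b<n. \<Sum>l<K. P l * (F a * R l a) * (G b * S l b))"
    by (intro sum.cong refl) (simp add: sum_distrib_left ac_simps)
  also have "\<dots> = (\<Sum>a<m. \<Sum>l<K. \<Sum>b<n. P l * (F a * R l a) * (G b * S l b))" by (rule sum_swap3)
  also have "\<dots> = (\<Sum>l<K. \<Sum>a<m. \<Sum>b<n. P l * (F a * R l a) * (G b * S l b))" by (rule sum.swap)
  also have "\<dots> = (\<Sum>l<K. P l * (\<Sum>a<m. \<Sum>b<n. (F a * R l a) * (G b * S l b)))"
    by (simp only: sum_distrib_left mult.assoc)
  also have "\<dots> = (\<Sum>l<K. P l * ((\<Sum>a<m. F a * R l a) * (\<Sum>b<n. G b * S l b)))"
    by (simp only: sum_product)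
  finally show ?thesis .
qed

lemma adj_carrier: "U \<in> carrier_mat k k \<Longrightarrow> adj U \<in> carrier_mat k k"
  by (simp add: adj_def conj_mat_def)

lemma unitary_recover:
  assumes U: "unitary m U" and R: "R \<in> carrier_mat m m" and y: "y < m" and a: "a < m"
  shows "R $$ (y,a) = (\<Sum>c<m. U $$ (y,c) * (adj U * R) $$ (c,a))"
proof -
  have Uc: "U \<in> carrier_mat m m" and UU: "U * adj U = 1\<^sub>m m" using U unfolding unitary_def by auto
  have "U * (adj U * R) = (U * adj U) * R"
    using Uc R adj_carrier[OF Uc] by (simp add: assoc_mult_mat)
  also have "\<dots> = R" using UU R by simp
  finally have e: "U * (adj U * R) = R" .
  have "R $$ (y,a) = (U * (adj U * R)) $$ (y,a)" unfolding e ..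
  also have "\<dots> = (\<Sum>c<m. U $$ (y,c) * (adj U * R) $$ (c,a))"
    using Uc R adj_carrier[OF Uc] y a by (intro mult_entry) auto
  finally show ?thesis .
qed

theorem proposition5p7:
  fixes m n :: nat and UA UB \<rho> :: "complex mat"
  assumes "unitary m UA" and "unitary n UB"
    and "quantum_U_state (m*n) (kron m n UA UB) \<rho>"
    and "separable m n UA UB \<rho>"
  shows "psd (m*n) (kron m n (conj_mat UA) (adj UB) * ptrans m n \<rho>)"
proof -
  note UA = assms(1) and UB = assms(2)
  have UAc: "UA \<in> carrier_mat m m" and UBc: "UB \<in> carrier_mat n n"
    using UA UB unfolding unitary_def by auto
  obtain K :: nat and p :: "nat \<Rightarrow> real" and \<sigma> :: "nat \<Rightarrow> complex mat" where hp: "\<forall>i<K. p i \<ge> 0 \<and> product_state m n UA UB (\<sigma> i)"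
    and rho: "\<rho> = mat (m*n) (m*n) (\<lambda>ij. \<Sum>i<K. complex_of_real (p i) * \<sigma> i $$ ij)"
    using assms(4) unfolding separable_def by blast
  have "\<forall>i\<in>{..<K}. \<exists>x. \<sigma> i = kron m n (fst x) (snd x) \<and> U_positive m UA (fst x) \<and> U_positive n UB (snd x)"
    using hp unfolding product_state_def by fastforce
  then obtain f where f: "\<forall>i\<in>{..<K}. \<sigma> i = kron m n (fst (f i)) (snd (f i)) \<and> U_positive m UA (fst (f i)) \<and> U_positive n UB (snd (f i))"
    by (metis bchoice)
  define RA where "RA i = fst (f i)" for i
  define RB where "RB i = snd (f i)" for i
  have sig: "\<And>l. l < K \<Longrightarrow> \<sigma> l = kron m n (RA l) (RB l)"
    and posA: "\<And>l. l < K \<Longrightarrow> U_positive m UA (RA l)"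
    and posB: "\<And>l. l < K \<Longrightarrow> U_positive n UB (RB l)"
    using f unfolding RA_def RB_def by auto
  have RAc: "\<And>l. l < K \<Longrightarrow> RA l \<in> carrier_mat m m" using posA unfolding U_positive_def by auto
  have RBc: "\<And>l. l < K \<Longrightarrow> RB l \<in> carrier_mat n n" using posB unfolding U_positive_def by auto
  define PA where "PA l c a = (adj UA * RA l) $$ (c,a)" for l c a
  define Ai where "Ai l x y = (\<Sum>a<m. cnj (UA $$ (x,a)) * (\<Sum>c<m. UA $$ (y,c) * PA l c a))" for l x y
  define Bi where "Bi l x y = (adj UB * RB l) $$ (x,y)" for l x y
  have fA: "fpsd m (Ai l)" if "l < K" for l
  proof -
    have "psd m (adj UA * RA l)" using posA[OF that] unfolding U_positive_def by auto
    hence "fpsd m (PA l)" unfolding psd_iff PA_def by auto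
    from conj_fpsd[OF this, of "\<lambda>x a. UA $$ (x,a)"] show ?thesis unfolding Ai_def[abs_def] .
  qed
  have fB: "fpsd n (Bi l)" if "l < K" for l
  proof -
    have "psd n (adj UB * RB l)" using posB[OF that] unfolding U_positive_def by auto
    thus ?thesis unfolding psd_iff Bi_def[abs_def] by auto
  qed
  define F where "F i j = (\<Sum>l<K. of_real (p l) * (Ai l (i div n) (j div n) * Bi l (i mod n) (j mod n)))" for i j
  have fF: "fpsd (m*n) F"
    unfolding F_def[abs_def]
    by (rule fpsd_sum[of K "m*n" "\<lambda>l i j. Ai l (i div n) (j div n) * Bi l (i mod n) (j mod n)"])
       (use kron_fpsd fA fB hp in auto)
  define X where "X = kron m n (conj_mat UA) (adj UB) * ptrans m n \<rho>"
  have kc: "kron m n (conj_mat UA) (adj UB) \<in> carrier_mat (m*n) (m*n)" by (simp add: kron_def)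
  have pc: "ptrans m n \<rho> \<in> carrier_mat (m*n) (m*n)" by (simp add: ptrans_def)
  have Xc: "X \<in> carrier_mat (m*n) (m*n)" unfolding X_def using kc pc by simp
  have Xe: "X $$ (i,j) = F i j" if i: "i < m*n" and j: "j < m*n" for i j
  proof -
    have np: "n > 0" using i by (cases n) auto
    have idiv: "i div n < m" "j div n < m" using i j by (auto simp: less_mult_imp_div_less)
    have imod: "i mod n < n" "j mod n < n" using np by auto
    have "X $$ (i,j) = (\<Sum>k<m*n. kron m n (conj_mat UA) (adj UB) $$ (i,k) * ptrans m n \<rho> $$ (k,j))"
      unfolding X_def using kc pc i j by (intro mult_entry) auto
    also have "\<dots> = (\<Sum>a<m. \<Sum>b<n. kron m n (conj_mat UA) (adj UB) $$ (i,a*n+b) * ptrans m n \<rho> $$ (a*n+b,j))"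
      by (rule sum_split_mult)
    also have "\<dots> = (\<Sum>a<m. \<Sum>b<n. cnj (UA $$ (i div n, a)) * cnj (UB $$ (b, i mod n)) *
        (\<Sum>l<K. of_real (p l) * (RA l $$ (j div n, a) * RB l $$ (b, j mod n))))"
    proof (intro sum.cong refl)
      fix a b assume a: "a \<in> {..<m}" and b: "b \<in> {..<n}"
      hence ab: "a*n+b < m*n" by (simp add: idx_bound)
      have r1: "(j div n)*n + b < m*n" using idiv b by (simp add: idx_bound)
      have r2: "a*n + j mod n < m*n" using a imod by (simp add: idx_bound)
      have "kron m n (conj_mat UA) (adj UB) $$ (i,a*n+b) = cnj (UA $$ (i div n, a)) * cnj (UB $$ (b, i mod n))"
        using i ab a b idiv imod UAc UBc dm[of b n a] by (simp add: kron_def conj_mat_def adj_def)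
      moreover have "ptrans m n \<rho> $$ (a*n+b,j) = (\<Sum>l<K. of_real (p l) * (RA l $$ (j div n, a) * RB l $$ (b, j mod n)))"
      proof -
        have "ptrans m n \<rho> $$ (a*n+b,j) = \<rho> $$ ((j div n)*n + b, a*n + j mod n)"
          using ab j b dm[of b n a] by (simp add: ptrans_def)
        also have "\<dots> = (\<Sum>l<K. of_real (p l) * \<sigma> l $$ ((j div n)*n + b, a*n + j mod n))"
          using r1 r2 unfolding rho by simp
        also have "\<dots> = (\<Sum>l<K. of_real (p l) * (RA l $$ (j div n, a) * RB l $$ (b, j mod n)))"
          using r1 r2 b imod dm[of b n "j div n"] dm[of "j mod n" n a]
          by (intro sum.cong refl) (simp add: sig kron_def)
        finally show ?thesis .
      qed
      ultimately show "kron m n (conj_mat UA) (adj UB) $$ (i,a*n+b) * ptrans m n \<rho> $$ (a*n+b,j) =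
        cnj (UA $$ (i div n, a)) * cnj (UB $$ (b, i mod n)) *
        (\<Sum>l<K. of_real (p l) * (RA l $$ (j div n, a) * RB l $$ (b, j mod n)))" by simp
    qed
    also have "\<dots> = (\<Sum>l<K. of_real (p l) * ((\<Sum>a<m. cnj (UA $$ (i div n, a)) * RA l $$ (j div n, a)) *
                      (\<Sum>b<n. cnj (UB $$ (b, i mod n)) * RB l $$ (b, j mod n))))"
      by (rule main_sum)
    also have "\<dots> = F i j"
      unfolding F_def
    proof (intro sum.cong refl arg_cong2[where f = "(*)"] refl)
      fix l assume l: "l \<in> {..<K}"
      show "(\<Sum>a<m. cnj (UA $$ (i div n, a)) * RA l $$ (j div n, a)) = Ai l (i div n) (j div n)"
        unfolding Ai_def PA_def using unitary_recover[OF UA RAc] l idiv by (intro sum.cong refl) auto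
      show "(\<Sum>b<n. cnj (UB $$ (b, i mod n)) * RB l $$ (b, j mod n)) = Bi l (i mod n) (j mod n)"
        unfolding Bi_def using mult_entry[OF adj_carrier[OF UBc] RBc] l imod UBc
        by (simp add: adj_def conj_mat_def)
    qed
    finally show ?thesis .
  qed
  have "fpsd (m*n) (\<lambda>i j. X $$ (i,j))" using fF fpsd_cong[of "m*n" "\<lambda>i j. X $$ (i,j)" F] Xe by simp
  thus ?thesis unfolding X_def[symmetric] psd_iff using Xc by simp
qed

end
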